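(* Let ${\mathbb K}$ be a field, $n\geqslant 2$ and $N$ a positive integer. Let $L$ be a set of lines of $\mathrm{AG}_n({\mathbb K})$, let $D\subseteq\mathrm{PG}_{n-1}({\mathbb K})$ be the set of directions of the lines of $L$, and let $S$ be a set of points of $\mathrm{AG}_n({\mathbb K})$ such that every line of $L$ is incident with at least $N$ points of $S$. If $D$ contains an $N^{n-1}$ grid then, for any positive integer $r$, $$\binom{2r+n-2}{n}|S|\geqslant\binom{rN+n-1}{n}.$$
   Context: The direction of an affine line $\{u+\lambda v:\lambda\in{\mathbb K}\}$ is the point $\langle v\rangle$ of $\mathrm{PG}_{n-1}({\mathbb K})$. An $N^{n-1}$ grid in $\mathrm{PG}_{n-1}({\mathbb K})$ is a point set which, with respect to a suitable basis, has the form $\{\langle(a_1,\ldots,a_{n-1},1)\rangle : a_i\in A_i\}$, where each $A_i\subseteq{\mathbb K}$ has size $N$. *)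

theory Defs
  imports "HOL-Analysis.Analysis"
begin

text \<open>Points of AG_n(K) are vectors of type 'k^'n, with n = CARD('n).\<close>

definition affine_line :: "('k::field ^ 'n) set \<Rightarrow> bool" where
  "affine_line l \<longleftrightarrow> (\<exists>u v. v \<noteq> 0 \<and> l = {u + c *s v | c. True})"

text \<open>The projective point spanned by a vector v (the 1-dim subspace).\<close>
definition proj_pt :: "'k::field ^ 'n \<Rightarrow> ('k ^ 'n) set" where
  "proj_pt v = {c *s v | c. True}"

text \<open>Direction of a line: the subspace of differences of its points, i.e. proj_pt v
  for the line {u + c v}.\<close>
definition direction :: "('k::field ^ 'n) set \<Rightarrow> ('k ^ 'n) set" where
  "direction l = {x - y | x y. x \<in> l \<and> y \<in> l}"

text \<open>An N^(n-1) grid with respect to the basis given by the columns of an invertible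
  matrix M, the coordinate i0 playing the role of the last coordinate.\<close>
definition is_grid :: "nat \<Rightarrow> ('k::field ^ 'n) set set \<Rightarrow> bool" where
  "is_grid N G \<longleftrightarrow> (\<exists>(M::'k^'n^'n) (i0::'n) (A::'n \<Rightarrow> 'k set).
      invertible M \<and> (\<forall>i. i \<noteq> i0 \<longrightarrow> finite (A i) \<and> card (A i) = N) \<and>
      G = {proj_pt (M *v x) | x. x $ i0 = 1 \<and> (\<forall>i. i \<noteq> i0 \<longrightarrow> x $ i \<in> A i)})"

end

theory Submission
  imports Defs "HOL-Computational_Algebra.Polynomial"
begin


definition mpow :: "('n::finite \<Rightarrow> 'a::comm_ring_1) \<Rightarrow> ('n \<Rightarrow> nat) \<Rightarrow> 'a" where
  "mpow x \<alpha> = (\<Prod>i\<in>UNIV. x i ^ \<alpha> i)"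
definition ev :: "(('n::finite \<Rightarrow> nat) \<Rightarrow> 'a::comm_ring_1) \<Rightarrow> ('n \<Rightarrow> 'a) \<Rightarrow> 'a" where
  "ev c x = (\<Sum>\<alpha> | c \<alpha> \<noteq> 0. c \<alpha> * mpow x \<alpha>)"
definition bc :: "('n::finite \<Rightarrow> nat) \<Rightarrow> ('n \<Rightarrow> nat) \<Rightarrow> nat" where
  "bc \<alpha> \<beta> = (\<Prod>i\<in>UNIV. \<alpha> i choose \<beta> i)"
definition Dh :: "('n::finite \<Rightarrow> nat) \<Rightarrow> (('n \<Rightarrow> nat) \<Rightarrow> 'a::comm_ring_1) \<Rightarrow> ('n \<Rightarrow> nat) \<Rightarrow> 'a" where
  "Dh \<gamma> c = (\<lambda>\<alpha>. of_nat (bc (\<lambda>i. \<alpha> i + \<gamma> i) \<gamma>) * c (\<lambda>i. \<alpha> i + \<gamma> i))"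
definition mbox :: "nat \<Rightarrow> ('n::finite \<Rightarrow> nat) set" where
  "mbox B = {\<alpha>. \<forall>i. \<alpha> i \<le> B}"

lemma box_PiE: "mbox B = PiE UNIV (\<lambda>_. {..B})"
  unfolding mbox_def PiE_def extensional_def by auto

lemma finite_box[simp]: "finite (mbox B)"
  unfolding box_PiE by (rule finite_PiE) auto

lemma ev_superset:
  assumes "finite F" "{\<alpha>. c \<alpha> \<noteq> 0} \<subseteq> F"
  shows "ev c x = (\<Sum>\<alpha>\<in>F. c \<alpha> * mpow x \<alpha>)"
  unfolding ev_def using assms by (intro sum.mono_neutral_left) auto

lemma bc_zero: "\<not> (\<forall>i. \<gamma> i \<le> \<alpha> i) \<Longrightarrow> bc \<alpha> \<gamma> = 0"
  unfolding bc_def by (auto simp: not_le)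

lemma EvD:
  assumes "finite F" "{\<alpha>. c \<alpha> \<noteq> 0} \<subseteq> F"
  shows "ev (Dh \<gamma> c) x = (\<Sum>\<alpha>\<in>F. c \<alpha> * of_nat (bc \<alpha> \<gamma>) * mpow x (\<lambda>i. \<alpha> i - \<gamma> i))"
proof -
  let ?F = "{\<alpha>\<in>F. \<forall>i. \<gamma> i \<le> \<alpha> i}"
  let ?G = "(\<lambda>\<alpha>. \<lambda>i. \<alpha> i - \<gamma> i) ` ?F"
  have fG: "finite ?G" using assms by auto
  have sG: "{\<alpha>. Dh \<gamma> c \<alpha> \<noteq> 0} \<subseteq> ?G"
  proof
    fix \<alpha> assume "\<alpha> \<in> {\<alpha>. Dh \<gamma> c \<alpha> \<noteq> 0}"
    then have "c (\<lambda>i. \<alpha> i + \<gamma> i) \<noteq> 0" by (auto simp: Dh_def)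
    then have m: "(\<lambda>i. \<alpha> i + \<gamma> i) \<in> ?F" using assms by auto
    show "\<alpha> \<in> ?G" using m by (intro image_eqI[where x="\<lambda>i. \<alpha> i + \<gamma> i"]) simp_all
  qed
  have inj: "inj_on (\<lambda>\<alpha>. \<lambda>i. \<alpha> i - \<gamma> i) ?F"
  proof (rule inj_onI)
    fix a b assume "a \<in> ?F" "b \<in> ?F" "(\<lambda>i. a i - \<gamma> i) = (\<lambda>i. b i - \<gamma> i)"
    show "a = b"
    proof
      fix i
      have "a i - \<gamma> i = b i - \<gamma> i" using \<open>(\<lambda>i. a i - \<gamma> i) = (\<lambda>i. b i - \<gamma> i)\<close> by (rule fun_cong)
      moreover have "\<gamma> i \<le> a i" "\<gamma> i \<le> b i" using \<open>a \<in> ?F\<close> \<open>b \<in> ?F\<close> by auto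
      ultimately show "a i = b i" by arith
    qed
  qed
  have "ev (Dh \<gamma> c) x = (\<Sum>\<alpha>\<in>?G. Dh \<gamma> c \<alpha> * mpow x \<alpha>)"
    by (rule ev_superset[OF fG sG])
  also have "\<dots> = (\<Sum>\<alpha>\<in>?F. Dh \<gamma> c (\<lambda>i. \<alpha> i - \<gamma> i) * mpow x (\<lambda>i. \<alpha> i - \<gamma> i))"
    by (simp add: sum.reindex[OF inj] comp_def)
  also have "\<dots> = (\<Sum>\<alpha>\<in>?F. c \<alpha> * of_nat (bc \<alpha> \<gamma>) * mpow x (\<lambda>i. \<alpha> i - \<gamma> i))"
  proof (rule sum.cong[OF refl])
    fix \<alpha> assume "\<alpha> \<in> ?F"
    then have e: "(\<lambda>i. \<alpha> i - \<gamma> i + \<gamma> i) = \<alpha>" by auto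
    show "Dh \<gamma> c (\<lambda>i. \<alpha> i - \<gamma> i) * mpow x (\<lambda>i. \<alpha> i - \<gamma> i) = c \<alpha> * of_nat (bc \<alpha> \<gamma>) * mpow x (\<lambda>i. \<alpha> i - \<gamma> i)"
      unfolding Dh_def e by simp
  qed
  also have "\<dots> = (\<Sum>\<alpha>\<in>F. c \<alpha> * of_nat (bc \<alpha> \<gamma>) * mpow x (\<lambda>i. \<alpha> i - \<gamma> i))"
    using assms(1) by (intro sum.mono_neutral_left) (auto simp: bc_zero)
  finally show ?thesis .
qed



lemma binom_ext:
  fixes a b :: "'a::comm_ring_1"
  assumes "n \<le> B"
  shows "(a + b)^n = (\<Sum>k\<in>{..B}. of_nat (n choose k) * a^k * b^(n-k))"
proof -
  have "(a + b)^n = (\<Sum>k\<le>n. of_nat (n choose k) * a^k * b^(n-k))" by (rule binomial_ring)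
  also have "\<dots> = (\<Sum>k\<in>{..B}. of_nat (n choose k) * a^k * b^(n-k))"
    using assms by (intro sum.mono_neutral_left) (auto, metis binomial_eq_0 not_le of_nat_0 mult_zero_left)
  finally show ?thesis .
qed

lemma mpow_expand:
  fixes x y :: "'n::finite \<Rightarrow> 'a::comm_ring_1"
  assumes "\<alpha> \<in> mbox B"
  shows "mpow (\<lambda>i. x i + y i) \<alpha> = (\<Sum>\<gamma>\<in>mbox B. of_nat (bc \<alpha> \<gamma>) * mpow y \<gamma> * mpow x (\<lambda>i. \<alpha> i - \<gamma> i))"
proof -
  have "mpow (\<lambda>i. x i + y i) \<alpha> = (\<Prod>i\<in>UNIV. (y i + x i) ^ \<alpha> i)"
    unfolding mpow_def by (simp add: add.commute)
  also have "\<dots> = (\<Prod>i\<in>UNIV. \<Sum>k\<in>{..B}. of_nat (\<alpha> i choose k) * y i^k * x i^(\<alpha> i-k))"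
    using assms by (intro prod.cong refl binom_ext) (auto simp: mbox_def)
  also have "\<dots> = (\<Sum>\<gamma>\<in>PiE UNIV (\<lambda>_. {..B}). \<Prod>i\<in>UNIV. of_nat (\<alpha> i choose \<gamma> i) * y i^\<gamma> i * x i^(\<alpha> i-\<gamma> i))"
    by (rule prod_sum_PiE) auto
  also have "\<dots> = (\<Sum>\<gamma>\<in>mbox B. of_nat (bc \<alpha> \<gamma>) * mpow y \<gamma> * mpow x (\<lambda>i. \<alpha> i - \<gamma> i))"
    unfolding box_PiE[symmetric] bc_def mpow_def by (simp add: prod.distrib of_nat_prod)
  finally show ?thesis .
qed

lemma taylor:
  fixes x y :: "'n::finite \<Rightarrow> 'a::comm_ring_1"
  assumes "finite F" "{\<alpha>. c \<alpha> \<noteq> 0} \<subseteq> F" "F \<subseteq> mbox B"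
  shows "ev c (\<lambda>i. x i + y i) = (\<Sum>\<gamma>\<in>mbox B. ev (Dh \<gamma> c) x * mpow y \<gamma>)"
proof -
  have "ev c (\<lambda>i. x i + y i) = (\<Sum>\<alpha>\<in>F. c \<alpha> * mpow (\<lambda>i. x i + y i) \<alpha>)"
    by (rule ev_superset[OF assms(1,2)])
  also have "\<dots> = (\<Sum>\<alpha>\<in>F. c \<alpha> * (\<Sum>\<gamma>\<in>mbox B. of_nat (bc \<alpha> \<gamma>) * mpow y \<gamma> * mpow x (\<lambda>i. \<alpha> i - \<gamma> i)))"
    using assms(3) by (intro sum.cong refl) (auto simp: mpow_expand)
  also have "\<dots> = (\<Sum>\<gamma>\<in>mbox B. \<Sum>\<alpha>\<in>F. c \<alpha> * of_nat (bc \<alpha> \<gamma>) * mpow x (\<lambda>i. \<alpha> i - \<gamma> i) * mpow y \<gamma>)"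
    by (subst sum.swap) (simp add: sum_distrib_left mult_ac)
  also have "\<dots> = (\<Sum>\<gamma>\<in>mbox B. ev (Dh \<gamma> c) x * mpow y \<gamma>)"
    by (simp add: EvD[OF assms(1,2)] sum_distrib_right)
  finally show ?thesis .
qed

lemma choose_comp:
  "((a + b) choose b) * ((a + b + g) choose g) = ((b + g) choose b) * ((a + b + g) choose (b + g))"
proof -
  have f1: "fact (a+b) = fact b * fact a * ((a+b) choose b)" using binomial_fact_lemma[of b "a+b"] by simp
  have f2: "fact (a+b+g) = fact g * fact (a+b) * ((a+b+g) choose g)" using binomial_fact_lemma[of g "a+b+g"] by simp
  have f3: "fact (b+g) = fact b * fact g * ((b+g) choose b)" using binomial_fact_lemma[of b "b+g"] by simp
  have f4: "fact (a+b+g) = fact (b+g) * fact a * ((a+b+g) choose (b+g))" using binomial_fact_lemma[of "b+g" "a+b+g"] by (simp add: add_ac)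
  have "fact a * fact b * fact g * (((a + b) choose b) * ((a + b + g) choose g)) = (fact (a+b+g) :: nat)"
    using f1 f2 by (simp add: mult_ac)
  moreover have "fact a * fact b * fact g * (((b + g) choose b) * ((a + b + g) choose (b + g))) = (fact (a+b+g) :: nat)"
    using f3 f4 by (simp add: mult_ac)
  ultimately show ?thesis
    by (metis (no_types, lifting) fact_nonzero mult_cancel_left mult_eq_0_iff)
qed

lemma Dh_Dh:
  fixes \<beta> \<gamma> :: "'n::finite \<Rightarrow> nat" and c :: "('n \<Rightarrow> nat) \<Rightarrow> 'a::comm_ring_1"
  shows "Dh \<beta> (Dh \<gamma> c) = (\<lambda>\<alpha>. of_nat (bc (\<lambda>i. \<beta> i + \<gamma> i) \<beta>) * Dh (\<lambda>i. \<beta> i + \<gamma> i) c \<alpha>)"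
proof
  fix \<alpha> :: "'n \<Rightarrow> nat"
  have e: "(\<lambda>i. \<alpha> i + \<beta> i + \<gamma> i) = (\<lambda>i. \<alpha> i + (\<beta> i + \<gamma> i))" by (simp add: add_ac)
  have "bc (\<lambda>i. \<alpha> i + \<beta> i) \<beta> * bc (\<lambda>i. \<alpha> i + \<beta> i + \<gamma> i) \<gamma>
      = bc (\<lambda>i. \<beta> i + \<gamma> i) \<beta> * bc (\<lambda>i. \<alpha> i + (\<beta> i + \<gamma> i)) (\<lambda>i. \<beta> i + \<gamma> i)"
    unfolding bc_def prod.distrib[symmetric] using choose_comp by (simp add: add_ac)
  then show "Dh \<beta> (Dh \<gamma> c) \<alpha> = of_nat (bc (\<lambda>i. \<beta> i + \<gamma> i) \<beta>) * Dh (\<lambda>i. \<beta> i + \<gamma> i) c \<alpha>"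
    unfolding Dh_def e[symmetric]
    by (simp add: e mult.assoc[symmetric] of_nat_mult[symmetric] del: of_nat_mult)
qed



definition tdeg :: "('n::finite \<Rightarrow> nat) \<Rightarrow> nat" where "tdeg \<beta> = sum \<beta> UNIV"

lemma box_mono: "B \<le> B' \<Longrightarrow> mbox B \<subseteq> mbox B'"
proof
  fix \<alpha> :: "'a \<Rightarrow> nat" assume a: "B \<le> B'" "\<alpha> \<in> mbox B"
  then have "\<alpha> i \<le> B" for i by (auto simp: mbox_def)
  then have "\<alpha> i \<le> B'" for i using a(1) le_trans by blast
  then show "\<alpha> \<in> mbox B'" by (simp add: mbox_def)
qed

lemma tdeg_box: "{\<beta>::'n::finite\<Rightarrow>nat. tdeg \<beta> = E} \<subseteq> mbox E"
proof
  fix \<beta> :: "'n \<Rightarrow> nat" assume "\<beta> \<in> {\<beta>. tdeg \<beta> = E}"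
  then have "\<beta> i \<le> E" for i unfolding tdeg_def
    using member_le_sum[of i UNIV \<beta>] by auto
  then show "\<beta> \<in> mbox E" by (auto simp: mbox_def)
qed

lemma finite_tdeg[simp]: "finite {\<beta>::'n::finite\<Rightarrow>nat. tdeg \<beta> = E}"
  using tdeg_box finite_box finite_subset by blast

lemma finite_in_box: "finite (F :: ('n::finite \<Rightarrow> nat) set) \<Longrightarrow> \<exists>B. F \<subseteq> mbox B"
proof (induction F rule: finite_induct)
  case empty then show ?case by auto
next
  case (insert a F)
  then obtain B where "F \<subseteq> mbox B" by auto
  moreover have "a \<in> mbox (tdeg a)" using tdeg_box by auto
  ultimately have "insert a F \<subseteq> mbox (max B (tdeg a))"
    using box_mono[of B "max B (tdeg a)"] box_mono[of "tdeg a" "max B (tdeg a)"] by auto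
  then show ?case by blast
qed

lemma ev_const:
  fixes c :: "('n::finite \<Rightarrow> nat) \<Rightarrow> 'a::comm_ring_1"
  assumes "finite {\<alpha>. c \<alpha> \<noteq> 0}"
  shows "ev (\<lambda>\<alpha>. [:c \<alpha>:]) (\<lambda>i. [:x i:]) = [:ev c x:]"
proof -
  have s: "{\<alpha>. [:c \<alpha>:] \<noteq> 0} = {\<alpha>. c \<alpha> \<noteq> 0}" by auto
  show ?thesis
    unfolding ev_def s mpow_def
    by (simp add: poly_const_pow prod_to_poly mult_to_poly sum_to_poly mult.commute)
qed

lemma Dh_const: "Dh \<gamma> (\<lambda>\<alpha>. [:c \<alpha>:]) = (\<lambda>\<alpha>. [:Dh \<gamma> c \<alpha>:])"
  unfolding Dh_def by (simp add: of_nat_poly mult_to_poly mult.commute)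

lemma fin_Dh:
  assumes "finite {\<alpha>. c \<alpha> \<noteq> 0}"
  shows "finite {\<alpha>. Dh \<gamma> c \<alpha> \<noteq> 0}"
proof -
  have "{\<alpha>. Dh \<gamma> c \<alpha> \<noteq> 0} \<subseteq> (\<lambda>\<alpha>. \<lambda>i. \<alpha> i + \<gamma> i) -` {\<alpha>. c \<alpha> \<noteq> 0}"
    by (auto simp: Dh_def)
  moreover have "inj (\<lambda>\<alpha>::'a\<Rightarrow>nat. \<lambda>i. \<alpha> i + \<gamma> i)"
    by (auto simp: inj_def fun_eq_iff)
  ultimately show ?thesis using assms finite_vimageI finite_subset by blast
qed

lemma prod_smult: "finite A \<Longrightarrow> (\<Prod>i\<in>A. smult (f i) (g i)) = smult (\<Prod>i\<in>A. f i) (\<Prod>i\<in>A. g i)"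
  by (induction A rule: finite_induct) (auto simp: mult_smult_left mult_smult_right mult.commute)

lemma mpow_lin:
  fixes W :: "'n::finite \<Rightarrow> 'a::comm_ring_1"
  shows "mpow (\<lambda>i. smult (W i) P) \<beta> = smult (mpow W \<beta>) (P ^ tdeg \<beta>)"
  unfolding mpow_def tdeg_def power_sum
  by (simp add: smult_power prod_smult)

lemma line_lemma:
  fixes e :: "('n::finite \<Rightarrow> nat) \<Rightarrow> 'k::field" and U W :: "'n \<Rightarrow> 'k"
  assumes fin: "finite {\<alpha>. e \<alpha> \<noteq> 0}"
    and T: "finite T" "N \<le> card T"
    and van: "\<And>t (\<beta>::'n\<Rightarrow>nat). t \<in> T \<Longrightarrow> tdeg \<beta> < \<mu> \<Longrightarrow> mpow W \<beta> \<noteq> 0 \<Longrightarrow> ev (Dh \<beta> e) (\<lambda>i. U i + t * W i) = 0"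
    and degb: "\<And>(\<beta>::'n\<Rightarrow>nat). tdeg \<beta> > E \<Longrightarrow> mpow W \<beta> \<noteq> 0 \<Longrightarrow> ev (Dh \<beta> e) U = 0"
    and num: "E < \<mu> * N"
  shows "(\<Sum>\<beta>\<in>{\<beta>::'n\<Rightarrow>nat. tdeg \<beta> = E}. ev (Dh \<beta> e) U * mpow W \<beta>) = 0"
proof -
  let ?F = "{\<alpha>. e \<alpha> \<noteq> 0}"
  obtain B0 where B0: "?F \<subseteq> mbox B0" using finite_in_box[OF fin] by auto
  define B where "B = max B0 E"
  have FB: "?F \<subseteq> mbox B" using B0 box_mono[of B0 B] by (auto simp: B_def)
  have EB: "{\<beta>. tdeg \<beta> = E} \<subseteq> mbox B" using tdeg_box[of E] box_mono[of E B] by (auto simp: B_def)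
  define e' where "e' = (\<lambda>\<alpha>. [:e \<alpha>:])"
  have sF: "{\<alpha>. e' \<alpha> \<noteq> 0} = ?F" by (auto simp: e'_def)
  define G where "G = ev e' (\<lambda>i. [:U i, W i:])"
  define a where "a = (\<lambda>\<beta>. ev (Dh \<beta> e) U * mpow W \<beta>)"
  have dv: "[:-t,1:]^\<mu> dvd G" if t: "t \<in> T" for t
  proof -
    define s where "s = (\<lambda>i. U i + t * W i)"
    have xy: "(\<lambda>i. [:U i, W i:]) = (\<lambda>i. [:s i:] + smult (W i) [:-t,1:])"
      by (auto simp: s_def)
    have "G = (\<Sum>\<beta>\<in>mbox B. ev (Dh \<beta> e') (\<lambda>i. [:s i:]) * mpow (\<lambda>i. smult (W i) [:-t,1:]) \<beta>)"
      unfolding G_def xy by (rule taylor) (use fin FB sF in auto)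
    also have "\<dots> = (\<Sum>\<beta>\<in>mbox B. smult (ev (Dh \<beta> e) s * mpow W \<beta>) ([:-t,1:] ^ tdeg \<beta>))"
      unfolding e'_def Dh_const mpow_lin
      by (simp add: ev_const fin_Dh[OF fin] mult.commute)
    finally have Geq: "G = \<dots>" .
    show ?thesis unfolding Geq
    proof (rule dvd_sum)
      fix \<beta> :: "'n \<Rightarrow> nat" assume "\<beta> \<in> mbox B"
      show "[:-t,1:]^\<mu> dvd smult (ev (Dh \<beta> e) s * mpow W \<beta>) ([:-t,1:] ^ tdeg \<beta>)"
      proof (cases "tdeg \<beta> < \<mu> \<and> mpow W \<beta> \<noteq> 0")
        case True
        then have "ev (Dh \<beta> e) s = 0" using van[OF t] by (auto simp: s_def)
        then show ?thesis by simp
      next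
        case False
        show ?thesis
        proof (cases "tdeg \<beta> < \<mu>")
          case True
          with False have "mpow W \<beta> = 0" by simp
          then show ?thesis by simp
        next
          case False
          then have "[:-t,1:]^\<mu> dvd [:-t,1:] ^ tdeg \<beta>" by (intro le_imp_power_dvd) auto
          then show ?thesis by (rule dvd_smult)
        qed
      qed
    qed
  qed
  have Geq2: "G = (\<Sum>\<beta>\<in>mbox B. monom (a \<beta>) (tdeg \<beta>))"
  proof -
    have xy: "(\<lambda>i. [:U i, W i:]) = (\<lambda>i. [:U i:] + smult (W i) [:0,1:])"
      by auto
    have "G = (\<Sum>\<beta>\<in>mbox B. ev (Dh \<beta> e') (\<lambda>i. [:U i:]) * mpow (\<lambda>i. smult (W i) [:0,1:]) \<beta>)"
      unfolding G_def xy by (rule taylor) (use fin FB sF in auto)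
    also have "\<dots> = (\<Sum>\<beta>\<in>mbox B. monom (a \<beta>) (tdeg \<beta>))"
      unfolding e'_def Dh_const mpow_lin a_def monom_altdef
      by (simp add: ev_const fin_Dh[OF fin] mult.commute)
    finally show ?thesis .
  qed
  have cG: "coeff G j = (\<Sum>\<beta> \<in> {\<beta>\<in>mbox B. tdeg \<beta> = j}. a \<beta>)" for j
    unfolding Geq2 coeff_sum coeff_monom by (simp add: sum.inter_filter[symmetric])
  have cz: "coeff G j = 0" if "j > E" for j
    unfolding cG a_def using that degb by (intro sum.neutral) auto
  have dG: "degree G \<le> E" using cz by (intro degree_le) auto
  have G0: "G = 0"
  proof (rule ccontr)
    assume nz: "G \<noteq> 0"
    have mu: "\<mu> \<ge> 1" using num by (cases \<mu>) auto
    have ord: "\<mu> \<le> order t G" if "t \<in> T" for t using dv[OF that] nz order_divides by blast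
    have Tr: "T \<subseteq> {x. poly G x = 0}"
      using ord mu nz order_root by fastforce
    have "\<mu> * N \<le> \<mu> * card T" using T by simp
    also have "\<dots> = (\<Sum>t\<in>T. \<mu>)" by simp
    also have "\<dots> \<le> (\<Sum>t\<in>T. order t G)" using ord by (intro sum_mono) auto
    also have "\<dots> \<le> (\<Sum>x | poly G x = 0. order x G)"
      using Tr poly_roots_finite[OF nz] by (intro sum_mono2) auto
    also have "\<dots> \<le> degree G" by (rule sum_order_le_degree[OF nz])
    finally show False using dG num by linarith
  qed
  have "(\<Sum>\<beta>\<in>{\<beta>::'n\<Rightarrow>nat. tdeg \<beta> = E}. a \<beta>) = coeff G E"
    unfolding cG using EB by (intro sum.cong) auto
  then show ?thesis using G0 by (simp add: a_def)
qed



lemma ev_scale: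
  assumes "finite {\<alpha>. c \<alpha> \<noteq> 0}"
  shows "ev (\<lambda>\<alpha>. a * c \<alpha>) x = a * ev c x"
proof -
  have "ev (\<lambda>\<alpha>. a * c \<alpha>) x = (\<Sum>\<alpha>\<in>{\<alpha>. c \<alpha> \<noteq> 0}. a * c \<alpha> * mpow x \<alpha>)"
    by (rule ev_superset) (use assms in auto)
  also have "\<dots> = a * ev c x" unfolding ev_def by (simp add: sum_distrib_left mult.assoc)
  finally show ?thesis .
qed

lemma ev_DhDh:
  assumes "finite {\<alpha>. c \<alpha> \<noteq> 0}"
  shows "ev (Dh \<beta> (Dh \<gamma> c)) x = of_nat (bc (\<lambda>i. \<beta> i + \<gamma> i) \<beta>) * ev (Dh (\<lambda>i. \<beta> i + \<gamma> i) c) x"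
  unfolding Dh_Dh by (rule ev_scale[OF fin_Dh[OF assms]])

lemma ev_nz: "ev c x \<noteq> 0 \<Longrightarrow> \<exists>\<alpha>. c \<alpha> \<noteq> 0"
  unfolding ev_def by (metis (mono_tags, lifting) empty_Collect_eq sum.empty)

definition ek :: "'n \<Rightarrow> nat \<Rightarrow> 'n \<Rightarrow> nat" where "ek k t = (\<lambda>i. if i = k then t else 0)"

lemma mpow_ek_nz:
  fixes \<beta> :: "'n::finite \<Rightarrow> nat"
  assumes "mpow (\<lambda>i. if i = k then (1::'a::comm_ring_1) else 0) \<beta> \<noteq> 0"
  shows "\<beta> = ek k (\<beta> k)"
proof
  fix i show "\<beta> i = ek k (\<beta> k) i"
  proof (cases "i = k")
    case False
    show ?thesis
    proof (rule ccontr)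
      assume "\<beta> i \<noteq> ek k (\<beta> k) i"
      then have "\<beta> i \<noteq> 0" using False by (simp add: ek_def)
      then have h: "(if i = k then (1::'a) else 0) ^ \<beta> i = 0" using False by (simp add: zero_power)
      have "mpow (\<lambda>i. if i = k then (1::'a::comm_ring_1) else 0) \<beta> = 0"
        unfolding mpow_def
      proof (rule prod_zero)
        show "\<exists>a\<in>UNIV. (if a = k then (1::'a) else 0) ^ \<beta> a = 0" using h by blast
      qed simp
      then show False using assms by simp
    qed
  qed (simp add: ek_def)
qed

lemma mpow_ek: "mpow (\<lambda>i. if i = k then (1::'a::comm_ring_1) else 0) (ek k t) = 1"
  unfolding mpow_def ek_def by (intro prod.neutral) auto

lemma tdeg_ek: "tdeg (ek k t) = t"
  unfolding tdeg_def ek_def by simp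

lemma bc_self_aux: "bc (\<lambda>i. \<beta> i + \<gamma> i) \<beta> = 1" if "\<And>i. \<beta> i = 0 \<or> \<gamma> i = 0"
  unfolding bc_def using that by (intro prod.neutral) (metis add_0 binomial_n_0 binomial_n_n add.right_neutral)

lemma bc_ek1: "\<gamma> k = 0 \<Longrightarrow> bc (\<lambda>i. ek k t i + \<gamma> i) (ek k t) = 1"
  by (rule bc_self_aux) (auto simp: ek_def)

lemma bc_ek2: "\<gamma> k = 0 \<Longrightarrow> bc (\<lambda>i. \<gamma> i + ek k t i) \<gamma> = 1"
  by (rule bc_self_aux) (auto simp: ek_def)

lemma sum_ek: "k \<notin> I \<Longrightarrow> finite I \<Longrightarrow> sum (\<lambda>i. \<beta> i + ek k t i) (insert k I) = \<beta> k + t + sum \<beta> I"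
proof -
  assume a: "k \<notin> I" "finite I"
  have "(\<Sum>i\<in>I. \<beta> i + ek k t i) = sum \<beta> I" using a by (intro sum.cong) (auto simp: ek_def)
  then show ?thesis using a by (simp add: ek_def)
qed



lemma mpow_nz_ek:
  fixes \<beta> :: "'n::finite \<Rightarrow> nat" and W :: "'n \<Rightarrow> 'a::comm_ring_1"
  assumes "\<And>i. i \<noteq> k \<Longrightarrow> W i = 0" "mpow W \<beta> \<noteq> 0"
  shows "\<beta> = ek k (\<beta> k)"
proof
  fix i show "\<beta> i = ek k (\<beta> k) i"
  proof (cases "i = k")
    case False
    show ?thesis
    proof (rule ccontr)
      assume "\<beta> i \<noteq> ek k (\<beta> k) i"
      then have "\<beta> i \<noteq> 0" using False by (simp add: ek_def)
      then have h: "W i ^ \<beta> i = 0" using False assms(1) by (simp add: zero_power)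
      have "mpow W \<beta> = 0"
        unfolding mpow_def
      proof (rule prod_zero)
        show "\<exists>a\<in>UNIV. W a ^ \<beta> a = 0" using h by blast
      qed simp
      then show False using assms by simp
    qed
  qed (simp add: ek_def)
qed

lemma ek_cases: "\<beta> = ek k (\<beta> k) \<Longrightarrow> i \<noteq> k \<Longrightarrow> \<beta> i = 0"
  by (metis ek_def)

lemma tdeg_ekc: "\<beta> = ek k (\<beta> k) \<Longrightarrow> tdeg \<beta> = \<beta> k"
  by (metis tdeg_ek)

lemma add_ek1: "\<gamma> k = 0 \<Longrightarrow> (\<lambda>i. \<gamma> i + ek k t i) = \<gamma>(k := t)"
  by (auto simp: ek_def fun_eq_iff)
lemma add_ek2: "\<gamma> k = 0 \<Longrightarrow> (\<lambda>i. ek k t i + \<gamma> i) = \<gamma>(k := t)"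
  by (auto simp: ek_def fun_eq_iff)

lemma bc_upd1: "\<gamma> k = 0 \<Longrightarrow> bc (\<gamma>(k := t)) (ek k t) = 1"
  using bc_ek1[of \<gamma> k t] add_ek2[of \<gamma> k t] by simp
lemma bc_upd2: "\<gamma> k = 0 \<Longrightarrow> bc (\<gamma>(k := t)) \<gamma> = 1"
  using bc_ek2[of \<gamma> k t] add_ek1[of \<gamma> k t] by simp

lemma sum_insert_ek:
  assumes "k \<notin> I" "finite I" "\<gamma> k = 0"
  shows "sum (\<lambda>i. ek k s i + \<gamma> i) (insert k I) = s + sum \<gamma> I"
proof -
  have "sum (\<lambda>i. ek k s i + \<gamma> i) I = sum \<gamma> I" using assms by (intro sum.cong) (auto simp: ek_def)
  then show ?thesis using assms by (simp add: ek_def)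
qed

lemma grid_lemma:
  fixes A :: "'n::finite \<Rightarrow> 'k::field set" and c :: "('n \<Rightarrow> nat) \<Rightarrow> 'k"
  assumes "finite I"
  shows "(\<And>i. i \<in> I \<Longrightarrow> finite (A i) \<and> card (A i) = N) \<Longrightarrow> finite {\<alpha>. c \<alpha> \<noteq> 0} \<Longrightarrow> r \<ge> 1 \<Longrightarrow>
     (\<And>\<alpha>. c \<alpha> \<noteq> 0 \<Longrightarrow> sum \<alpha> I \<le> d) \<Longrightarrow>
     (\<And>x \<gamma>. (\<forall>i\<in>I. x i \<in> A i) \<Longrightarrow> (\<forall>i. i \<notin> I \<longrightarrow> x i = z i) \<Longrightarrow> (\<forall>i. i \<notin> I \<longrightarrow> \<gamma> i = 0) \<Longrightarrow> sum \<gamma> I < r \<Longrightarrow> ev (Dh \<gamma> c) x = 0) \<Longrightarrow>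
     (\<exists>x \<gamma>. (\<forall>i. i \<notin> I \<longrightarrow> x i = z i) \<and> (\<forall>i. i \<notin> I \<longrightarrow> \<gamma> i = 0) \<and> ev (Dh \<gamma> c) x \<noteq> 0) \<Longrightarrow>
     r * N \<le> d"
  using assms
proof (induction I arbitrary: c z d r rule: finite_induct)
  case empty
  from empty.prems(6) obtain x \<gamma> where x: "\<forall>i. x i = z i" and g: "\<forall>i. \<gamma> i = 0" and nz: "ev (Dh \<gamma> c) x \<noteq> 0"
    by auto
  have xz: "x = z" "\<gamma> = (\<lambda>_. 0)" using x g by (auto simp: fun_eq_iff)
  have "ev (Dh \<gamma> c) x = 0" using empty.prems(3) empty.prems(5)[of x \<gamma>] unfolding xz by auto
  then show ?case using nz by simp
next
  case (insert k I)
  note hyps = insert.hyps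
  note A = insert.prems(1)
  note finc = insert.prems(2)
  note r1 = insert.prems(3)
  note degc = insert.prems(4)
  note van = insert.prems(5)
  note wit = insert.prems(6)
  show ?case
  proof (cases "N = 0")
    case True then show ?thesis by simp
  next
    case False
    then have Npos: "N > 0" by simp
    define P where "P \<rho> \<longleftrightarrow> (\<exists>x \<gamma>. (\<forall>i. i \<notin> I \<longrightarrow> x i = (z(k:=0)) i) \<and> (\<forall>i. i \<notin> I \<longrightarrow> \<gamma> i = 0) \<and> ev (Dh (\<gamma>(k:=\<rho>)) c) x \<noteq> 0)" for \<rho>
    have Pbd: "\<rho> \<le> d" if "P \<rho>" for \<rho>
    proof -
      from that obtain x \<gamma> where nz: "ev (Dh (\<gamma>(k:=\<rho>)) c) x \<noteq> 0" unfolding P_def by blast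
      then obtain \<alpha> where "Dh (\<gamma>(k:=\<rho>)) c \<alpha> \<noteq> 0" using ev_nz by blast
      then have "c (\<lambda>i. \<alpha> i + (\<gamma>(k:=\<rho>)) i) \<noteq> 0" by (auto simp: Dh_def)
      then have s: "sum (\<lambda>i. \<alpha> i + (\<gamma>(k:=\<rho>)) i) (insert k I) \<le> d" by (rule degc)
      have "\<rho> \<le> \<alpha> k + (\<gamma>(k:=\<rho>)) k" by simp
      also have "\<dots> \<le> sum (\<lambda>i. \<alpha> i + (\<gamma>(k:=\<rho>)) i) (insert k I)"
        using hyps by (intro member_le_sum) auto
      finally show ?thesis using s by linarith
    qed
    have Pex: "\<exists>\<rho>. P \<rho>"
    proof -
      from wit obtain x0 \<gamma>0 where x0: "\<forall>i. i \<notin> insert k I \<longrightarrow> x0 i = z i" and g0: "\<forall>i. i \<notin> insert k I \<longrightarrow> \<gamma>0 i = 0"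
        and nz: "ev (Dh \<gamma>0 c) x0 \<noteq> 0" by blast
      define e where "e = Dh \<gamma>0 c"
      have fe: "finite {\<alpha>. e \<alpha> \<noteq> 0}" unfolding e_def by (rule fin_Dh[OF finc])
      obtain B where B: "{\<alpha>. e \<alpha> \<noteq> 0} \<subseteq> mbox B" using finite_in_box[OF fe] by blast
      define x' where "x' = x0(k:=0)"
      define y where "y = (\<lambda>i. if i = k then x0 k else 0)"
      have xy: "(\<lambda>i. x' i + y i) = x0" by (auto simp: x'_def y_def fun_eq_iff)
      have "ev e x0 = (\<Sum>\<beta>\<in>mbox B. ev (Dh \<beta> e) x' * mpow y \<beta>)"
        unfolding xy[symmetric] by (rule taylor[OF fe subset_refl B])
      then have "(\<Sum>\<beta>\<in>mbox B. ev (Dh \<beta> e) x' * mpow y \<beta>) \<noteq> 0" using nz by (simp add: e_def)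
      then obtain \<beta> where bnz: "ev (Dh \<beta> e) x' * mpow y \<beta> \<noteq> 0"
        by (meson sum.neutral)
      then have "mpow y \<beta> \<noteq> 0" by auto
      then have bek: "\<beta> = ek k (\<beta> k)" by (rule mpow_nz_ek[rotated]) (simp add: y_def)
      have "ev (Dh \<beta> e) x' = of_nat (bc (\<lambda>i. \<beta> i + \<gamma>0 i) \<beta>) * ev (Dh (\<lambda>i. \<beta> i + \<gamma>0 i) c) x'"
        unfolding e_def by (rule ev_DhDh[OF finc])
      then have nz2: "ev (Dh (\<lambda>i. \<beta> i + \<gamma>0 i) c) x' \<noteq> 0" using bnz by auto
      have eq: "(\<lambda>i. \<beta> i + \<gamma>0 i) = (\<gamma>0(k:=0))(k := \<beta> k + \<gamma>0 k)"
      proof (rule ext)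
        fix i show "\<beta> i + \<gamma>0 i = ((\<gamma>0(k:=0))(k := \<beta> k + \<gamma>0 k)) i"
        proof (cases "i = k")
          case False
          then show ?thesis using ek_cases[OF bek False] by simp
        qed simp
      qed
      have "P (\<beta> k + \<gamma>0 k)" unfolding P_def
      proof (intro exI[of _ x'] exI[of _ "\<gamma>0(k:=0)"] conjI)
        show "\<forall>i. i \<notin> I \<longrightarrow> x' i = (z(k := 0)) i" using x0 by (auto simp: x'_def)
        show "\<forall>i. i \<notin> I \<longrightarrow> (\<gamma>0(k := 0)) i = 0" using g0 by auto
        show "ev (Dh ((\<gamma>0(k := 0))(k := \<beta> k + \<gamma>0 k)) c) x' \<noteq> 0" using nz2 unfolding eq .
      qed
      then show ?thesis by blast
    qed
    have "{\<rho>. P \<rho>} \<subseteq> {..d}" using Pbd by blast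
    then have finP: "finite {\<rho>. P \<rho>}" using finite_subset by blast
    define t where "t = Max {\<rho>. P \<rho>}"
    have ne: "{\<rho>. P \<rho>} \<noteq> {}" using Pex by blast
    have "t \<in> {\<rho>. P \<rho>}" unfolding t_def by (rule Max_in[OF finP ne])
    then have Pt: "P t" by simp
    have Pmax: "\<rho> \<le> t" if "P \<rho>" for \<rho> unfolding t_def using that by (intro Max_ge[OF finP]) simp
    have td: "t \<le> d" using Pbd Pt by blast
    show ?thesis
    proof (cases "r * N \<le> t")
      case True then show ?thesis using td by linarith
    next
      case False
      define q where "q = t div N"
      have qr: "q < r" unfolding q_def using False Npos by (simp add: div_less_iff_less_mult)
      have qN: "q * N \<le> t" unfolding q_def by (rule div_times_less_eq_dividend)
      have tq: "t < (q + 1) * N" unfolding q_def using Npos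
        by (metis add.commute dividend_less_div_times mult.commute mult_Suc plus_1_eq_Suc)
      define r' where "r' = r - q"
      define c' where "c' = Dh (ek k t) c"
      define z' where "z' = z(k:=0)"
      have p2: "finite {\<alpha>. c' \<alpha> \<noteq> 0}" unfolding c'_def by (rule fin_Dh[OF finc])
      have p3: "r' \<ge> 1" using qr by (simp add: r'_def)
      have p4: "sum \<alpha> I \<le> d - t" if "c' \<alpha> \<noteq> 0" for \<alpha>
      proof -
        have "c (\<lambda>i. \<alpha> i + ek k t i) \<noteq> 0" using that by (auto simp: c'_def Dh_def)
        then have "sum (\<lambda>i. \<alpha> i + ek k t i) (insert k I) \<le> d" by (rule degc)
        then show ?thesis using sum_ek[OF hyps(2) hyps(1)] by simp
      qed
      have p5: "ev (Dh \<gamma> c') x = 0"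
        if x1: "\<forall>i\<in>I. x i \<in> A i" and x2: "\<forall>i. i \<notin> I \<longrightarrow> x i = z' i" and g1: "\<forall>i. i \<notin> I \<longrightarrow> \<gamma> i = 0"
          and g2: "sum \<gamma> I < r'" for x \<gamma>
      proof -
        have gk: "\<gamma> k = 0" using g1 hyps by auto
        have xk: "x k = 0" using x2 hyps by (auto simp: z'_def)
        define W :: "'n \<Rightarrow> 'k" where "W = (\<lambda>i. if i = k then 1 else 0)"
        define \<mu> where "\<mu> = r - sum \<gamma> I"
        have fe: "finite {\<alpha>. Dh \<gamma> c \<alpha> \<noteq> 0}" by (rule fin_Dh[OF finc])
        have Ak: "finite (A k)" "card (A k) = N" using A by auto
        have LL: "(\<Sum>\<beta>\<in>{\<beta>::'n\<Rightarrow>nat. tdeg \<beta> = t}. ev (Dh \<beta> (Dh \<gamma> c)) x * mpow W \<beta>) = 0"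
        proof (rule line_lemma[OF fe Ak(1), of N \<mu> W x t])
          show "N \<le> card (A k)" using Ak by simp
        next
          fix t' and \<beta> :: "'n \<Rightarrow> nat"
          assume t': "t' \<in> A k" and b1: "tdeg \<beta> < \<mu>" and b2: "mpow W \<beta> \<noteq> 0"
          have bek: "\<beta> = ek k (\<beta> k)" by (rule mpow_nz_ek[OF _ b2]) (simp add: W_def)
          have "tdeg \<beta> = \<beta> k" by (rule tdeg_ekc[OF bek])
          then have bk: "\<beta> k < \<mu>" using b1 by simp
          have eqb: "(\<lambda>i. \<beta> i + \<gamma> i) = (\<lambda>i. ek k (\<beta> k) i + \<gamma> i)"
            using ek_cases[OF bek] by (auto simp: fun_eq_iff ek_def)
          have "ev (Dh (\<lambda>i. ek k (\<beta> k) i + \<gamma> i) c) (\<lambda>i. x i + t' * W i) = 0"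
          proof (rule van)
            show "\<forall>i\<in>insert k I. (x i + t' * W i) \<in> A i" using x1 t' xk hyps by (auto simp: W_def)
            show "\<forall>i. i \<notin> insert k I \<longrightarrow> x i + t' * W i = z i" using x2 by (auto simp: W_def z'_def)
            show "\<forall>i. i \<notin> insert k I \<longrightarrow> ek k (\<beta> k) i + \<gamma> i = 0" using g1 by (auto simp: ek_def)
            show "sum (\<lambda>i. ek k (\<beta> k) i + \<gamma> i) (insert k I) < r"
              using sum_insert_ek[where s="\<beta> k" and k=k and I=I and \<gamma>=\<gamma>, OF hyps(2) hyps(1) gk] bk g2 by (simp add: \<mu>_def r'_def)
          qed
          then show "ev (Dh \<beta> (Dh \<gamma> c)) (\<lambda>i. x i + t' * W i) = 0"
            by (simp add: ev_DhDh[OF finc] eqb)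
        next
          fix \<beta> :: "'n \<Rightarrow> nat"
          assume b1: "t < tdeg \<beta>" and b2: "mpow W \<beta> \<noteq> 0"
          have bek: "\<beta> = ek k (\<beta> k)" by (rule mpow_nz_ek[OF _ b2]) (simp add: W_def)
          have "tdeg \<beta> = \<beta> k" by (rule tdeg_ekc[OF bek])
          then have bk: "t < \<beta> k" using b1 by simp
          then have nP: "\<not> P (\<beta> k)" using Pmax by force
          have eqb: "(\<lambda>i. \<beta> i + \<gamma> i) = \<gamma>(k := \<beta> k)"
            using ek_cases[OF bek] gk by (auto simp: fun_eq_iff)
          have "ev (Dh (\<gamma>(k := \<beta> k)) c) x = 0" using nP x2 g1 unfolding P_def z'_def by blast
          then show "ev (Dh \<beta> (Dh \<gamma> c)) x = 0" by (simp add: ev_DhDh[OF finc] eqb)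
        next
          have "q + 1 \<le> \<mu>" using g2 by (simp add: \<mu>_def r'_def)
          then have "(q + 1) * N \<le> \<mu> * N" by (rule mult_le_mono1)
          then show "t < \<mu> * N" using tq by linarith
        qed
        have "(\<Sum>\<beta>\<in>{\<beta>::'n\<Rightarrow>nat. tdeg \<beta> = t}. ev (Dh \<beta> (Dh \<gamma> c)) x * mpow W \<beta>)
            = (\<Sum>\<beta>\<in>{ek k t}. ev (Dh \<beta> (Dh \<gamma> c)) x * mpow W \<beta>)"
        proof (rule sum.mono_neutral_right)
          show "{ek k t} \<subseteq> {\<beta>. tdeg \<beta> = t}" by (simp add: tdeg_ek)
          show "\<forall>\<beta>\<in>{\<beta>. tdeg \<beta> = t} - {ek k t}. ev (Dh \<beta> (Dh \<gamma> c)) x * mpow W \<beta> = 0"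
          proof
            fix \<beta> :: "'n \<Rightarrow> nat" assume b: "\<beta> \<in> {\<beta>. tdeg \<beta> = t} - {ek k t}"
            show "ev (Dh \<beta> (Dh \<gamma> c)) x * mpow W \<beta> = 0"
            proof (rule ccontr)
              assume "ev (Dh \<beta> (Dh \<gamma> c)) x * mpow W \<beta> \<noteq> 0"
              then have "mpow W \<beta> \<noteq> 0" by auto
              then have bek: "\<beta> = ek k (\<beta> k)" by (rule mpow_nz_ek[rotated]) (simp add: W_def)
              have "tdeg \<beta> = \<beta> k" by (rule tdeg_ekc[OF bek])
              then have "\<beta> = ek k t" using b bek by simp
              then show False using b by simp
            qed
          qed
        qed simp
        also have "\<dots> = ev (Dh (ek k t) (Dh \<gamma> c)) x" by (simp add: W_def mpow_ek)
        also have "\<dots> = ev (Dh (\<gamma>(k:=t)) c) x"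
          by (simp add: ev_DhDh[OF finc] bc_upd1[where \<gamma>=\<gamma> and k=k, OF gk] add_ek2[where \<gamma>=\<gamma> and k=k, OF gk])
        finally have z0: "ev (Dh (\<gamma>(k:=t)) c) x = 0" using LL by simp
        show ?thesis unfolding c'_def
          by (simp add: ev_DhDh[OF finc] bc_upd2[where \<gamma>=\<gamma> and k=k, OF gk] add_ek1[where \<gamma>=\<gamma> and k=k, OF gk] z0)
      qed
      have p6: "\<exists>x \<gamma>. (\<forall>i. i \<notin> I \<longrightarrow> x i = z' i) \<and> (\<forall>i. i \<notin> I \<longrightarrow> \<gamma> i = 0) \<and> ev (Dh \<gamma> c') x \<noteq> 0"
      proof -
        from Pt obtain x \<gamma> where x: "\<forall>i. i \<notin> I \<longrightarrow> x i = (z(k:=0)) i" and g: "\<forall>i. i \<notin> I \<longrightarrow> \<gamma> i = 0"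
          and nz: "ev (Dh (\<gamma>(k:=t)) c) x \<noteq> 0" unfolding P_def by blast
        have gk: "\<gamma> k = 0" using g hyps by auto
        have "ev (Dh \<gamma> c') x = ev (Dh (\<gamma>(k:=t)) c) x" unfolding c'_def
          by (simp add: ev_DhDh[OF finc] bc_upd2[where \<gamma>=\<gamma> and k=k, OF gk] add_ek1[where \<gamma>=\<gamma> and k=k, OF gk])
        then show ?thesis using x g nz unfolding z'_def by metis
      qed
      have "r' * N \<le> d - t"
        by (rule insert.IH[of c' r' "d - t" z', OF _ p2 p3 p4 p5 p6]) (use A in auto)
      then have "r' * N + q * N \<le> d" using qN td by linarith
      moreover have "r * N = r' * N + q * N" using qr by (simp add: r'_def diff_mult_distrib)
      ultimately show ?thesis by simp
    qed
  qed
qed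



lemma card_mon_gen:
  assumes "finite I"
  shows "card {\<alpha>::'n::finite\<Rightarrow>nat. (\<forall>i. i \<notin> I \<longrightarrow> \<alpha> i = 0) \<and> sum \<alpha> I \<le> d} = (d + card I) choose card I"
  using assms
proof (induction I arbitrary: d rule: finite_induct)
  case empty
  have "{\<alpha>::'n\<Rightarrow>nat. (\<forall>i. i \<notin> {} \<longrightarrow> \<alpha> i = 0) \<and> sum \<alpha> {} \<le> d} = {\<lambda>_. 0}"
    by (auto simp: fun_eq_iff)
  then show ?case by simp
next
  case (insert k I)
  define S where "S = (\<lambda>e. {\<alpha>::'n\<Rightarrow>nat. (\<forall>i. i \<notin> I \<longrightarrow> \<alpha> i = 0) \<and> sum \<alpha> I \<le> e})"
  let ?m = "card I"
  have eq: "{\<alpha>::'n\<Rightarrow>nat. (\<forall>i. i \<notin> insert k I \<longrightarrow> \<alpha> i = 0) \<and> sum \<alpha> (insert k I) \<le> d}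
      = (\<lambda>(j, \<alpha>). \<alpha>(k := j)) ` (SIGMA j:{..d}. S (d - j))"
  proof (intro equalityI subsetI)
    fix \<alpha> :: "'n \<Rightarrow> nat"
    assume a: "\<alpha> \<in> {\<alpha>. (\<forall>i. i \<notin> insert k I \<longrightarrow> \<alpha> i = 0) \<and> sum \<alpha> (insert k I) \<le> d}"
    have s1: "sum (\<alpha>(k:=0)) I = sum \<alpha> I" using insert.hyps by (intro sum.cong) auto
    have "sum \<alpha> (insert k I) = \<alpha> k + sum \<alpha> I" using insert.hyps by simp
    then have "(\<alpha> k, \<alpha>(k:=0)) \<in> (SIGMA j:{..d}. S (d - j))"
      using a s1 by (auto simp: S_def)
    moreover have "\<alpha> = (\<lambda>(j, \<alpha>). \<alpha>(k := j)) (\<alpha> k, \<alpha>(k:=0))" by simp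
    ultimately show "\<alpha> \<in> (\<lambda>(j, \<alpha>). \<alpha>(k := j)) ` (SIGMA j:{..d}. S (d - j))" by (rule rev_image_eqI)
  next
    fix \<beta> :: "'n \<Rightarrow> nat"
    assume "\<beta> \<in> (\<lambda>(j, \<alpha>). \<alpha>(k := j)) ` (SIGMA j:{..d}. S (d - j))"
    then obtain j \<alpha> where j: "j \<le> d" and al: "\<alpha> \<in> S (d - j)" and b: "\<beta> = \<alpha>(k := j)" by auto
    have s1: "sum (\<alpha>(k:=j)) I = sum \<alpha> I" using insert.hyps by (intro sum.cong) auto
    have "sum \<beta> (insert k I) = j + sum \<alpha> I" using insert.hyps s1 b by simp
    then show "\<beta> \<in> {\<alpha>. (\<forall>i. i \<notin> insert k I \<longrightarrow> \<alpha> i = 0) \<and> sum \<alpha> (insert k I) \<le> d}"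
      using al j b by (auto simp: S_def)
  qed
  have inj: "inj_on (\<lambda>(j, \<alpha>). \<alpha>(k := j)) (SIGMA j:{..d}. S (d - j))"
  proof (rule inj_onI)
    fix p q assume p: "p \<in> (SIGMA j:{..d}. S (d - j))" and q: "q \<in> (SIGMA j:{..d}. S (d - j))"
      and e: "(\<lambda>(j, \<alpha>). \<alpha>(k := j)) p = (\<lambda>(j, \<alpha>). \<alpha>(k := j)) q"
    obtain j \<alpha> where pj: "p = (j, \<alpha>)" by (cases p)
    obtain j' \<alpha>' where qj: "q = (j', \<alpha>')" by (cases q)
    have "\<alpha> k = 0" "\<alpha>' k = 0" using p q pj qj insert.hyps by (auto simp: S_def)
    moreover have "\<alpha>(k := j) = \<alpha>'(k := j')" using e pj qj by simp
    ultimately have "j = j'" "\<alpha> = \<alpha>'" by (metis fun_upd_same, metis fun_upd_triv fun_upd_upd)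
    then show "p = q" using pj qj by simp
  qed
  have finS: "finite (S e)" for e
  proof -
    have "S e \<subseteq> mbox e" unfolding S_def mbox_def
    proof (safe)
      fix \<alpha> :: "'n \<Rightarrow> nat" and i assume a: "\<forall>i. i \<notin> I \<longrightarrow> \<alpha> i = 0" "sum \<alpha> I \<le> e"
      show "\<alpha> i \<le> e"
      proof (cases "i \<in> I")
        case True then have "\<alpha> i \<le> sum \<alpha> I" using insert.hyps by (intro member_le_sum) auto
        then show ?thesis using a by linarith
      qed (use a in auto)
    qed
    then show ?thesis using finite_subset finite_box by blast
  qed
  have "card {\<alpha>::'n\<Rightarrow>nat. (\<forall>i. i \<notin> insert k I \<longrightarrow> \<alpha> i = 0) \<and> sum \<alpha> (insert k I) \<le> d}
      = card (SIGMA j:{..d}. S (d - j))"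
    unfolding eq by (rule card_image[OF inj])
  also have "\<dots> = (\<Sum>j\<le>d. card (S (d - j)))" by (rule card_SigmaI) (auto simp: finS)
  also have "\<dots> = (\<Sum>j\<le>d. (d - j + ?m) choose ?m)" unfolding S_def using insert.IH by simp
  also have "\<dots> = (\<Sum>j<Suc d. (d - j + ?m) choose ?m)" by (simp add: lessThan_Suc_atMost)
  also have "\<dots> = (\<Sum>j<Suc d. (j + ?m) choose ?m)"
    using sum.nat_diff_reindex[of "\<lambda>j. (j + ?m) choose ?m" "Suc d"] by simp
  also have "\<dots> = (\<Sum>j\<le>d. (?m + j) choose j)"
    by (simp add: lessThan_Suc_atMost binomial_symmetric[of ?m] add.commute)
  also have "\<dots> = Suc (?m + d) choose d" by (rule sum_choose_lower)
  also have "\<dots> = Suc (?m + d) choose Suc ?m"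
  proof -
    have h1: "Suc (?m + d) - d = Suc ?m" by simp
    show ?thesis by (subst h1[symmetric], rule binomial_symmetric) simp
  qed
  also have "\<dots> = (d + card (insert k I)) choose card (insert k I)"
    using insert.hyps by (simp add: add.commute del: binomial_Suc_Suc)
  finally show ?case .
qed

lemma card_mon: "card {\<alpha>::'n::finite\<Rightarrow>nat. tdeg \<alpha> \<le> d} = (d + CARD('n)) choose CARD('n)"
  using card_mon_gen[of "UNIV::'n set" d] unfolding tdeg_def by simp

lemma lin_solve:
  fixes a :: "'j \<Rightarrow> 'i \<Rightarrow> 'k::field"
  assumes "finite J" "finite I" "card J < card I"
  shows "\<exists>c. (\<exists>i\<in>I. c i \<noteq> 0) \<and> (\<forall>j\<in>J. (\<Sum>i\<in>I. a j i * c i) = 0)"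
  using assms
proof (induction J arbitrary: I a rule: finite_induct)
  case empty
  then obtain i0 where "i0 \<in> I" by fastforce
  then show ?case by (intro exI[of _ "\<lambda>i. if i = i0 then 1 else 0"]) auto
next
  case (insert j J)
  show ?case
  proof (cases "\<forall>i\<in>I. a j i = 0")
    case True
    obtain c where c: "\<exists>i\<in>I. c i \<noteq> 0" "\<forall>j\<in>J. (\<Sum>i\<in>I. a j i * c i) = 0"
      using insert.IH[of I a] insert.prems insert.hyps by auto
    show ?thesis using c True by (intro exI[of _ c]) auto
  next
    case False
    then obtain i0 where i0: "i0 \<in> I" "a j i0 \<noteq> 0" by blast
    define I' where "I' = I - {i0}"
    have fI': "finite I'" using insert.prems by (simp add: I'_def)
    have cI': "card J < card I'" using insert.prems insert.hyps i0 by (simp add: I'_def)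
    define a' where "a' = (\<lambda>j' i. a j' i - a j' i0 * a j i / a j i0)"
    obtain c' where c'1: "\<exists>i\<in>I'. c' i \<noteq> 0" and c'2: "\<forall>j'\<in>J. (\<Sum>i\<in>I'. a' j' i * c' i) = 0"
      using insert.IH[OF fI' cI', of a'] by blast
    define c where "c = (\<lambda>i. if i = i0 then - (\<Sum>i'\<in>I'. a j i' * c' i') / a j i0 else c' i)"
    have split: "(\<Sum>i\<in>I. f i) = f i0 + (\<Sum>i\<in>I'. f i)" for f :: "'i \<Rightarrow> 'k"
      using insert.prems i0 by (simp add: I'_def sum.remove)
    have cI: "(\<Sum>i\<in>I'. g i * c i) = (\<Sum>i\<in>I'. g i * c' i)" for g :: "'i \<Rightarrow> 'k"
      by (intro sum.cong) (auto simp: c_def I'_def)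
    have nz: "\<exists>i\<in>I. c i \<noteq> 0" using c'1 by (auto simp: c_def I'_def)
    have eqs: "(\<Sum>i\<in>I. a j' i * c i) = 0" if "j' \<in> insert j J" for j'
    proof (cases "j' = j")
      case True
      show ?thesis unfolding True split cI using i0 by (simp add: c_def)
    next
      case False
      then have "j' \<in> J" using that by auto
      then have "(\<Sum>i\<in>I'. a' j' i * c' i) = 0" using c'2 by auto
      then have "(\<Sum>i\<in>I'. a j' i * c' i) - a j' i0 / a j i0 * (\<Sum>i\<in>I'. a j i * c' i) = 0"
        unfolding a'_def by (simp add: algebra_simps sum_subtractf sum_distrib_left)
      then show ?thesis unfolding split cI using i0 by (simp add: c_def field_simps)
    qed
    show ?thesis using nz eqs by blast
  qed
qed



lemma tdeg_add: "tdeg (\<lambda>i. \<alpha> i + \<gamma> i) = tdeg \<alpha> + tdeg \<gamma>"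
  unfolding tdeg_def by (simp add: sum.distrib)

lemma ev_zero_fun: "(\<And>\<alpha>. c \<alpha> = 0) \<Longrightarrow> ev c x = 0"
  unfolding ev_def by simp

lemma Dh_high:
  assumes "\<And>\<alpha>. c \<alpha> \<noteq> 0 \<Longrightarrow> tdeg \<alpha> \<le> D" "tdeg \<delta> > D"
  shows "ev (Dh \<delta> c) x = 0"
proof (rule ev_zero_fun)
  fix \<alpha>
  have "tdeg (\<lambda>i. \<alpha> i + \<delta> i) > D" using assms(2) by (simp add: tdeg_add)
  then have "c (\<lambda>i. \<alpha> i + \<delta> i) = 0" using assms(1) by force
  then show "Dh \<delta> c \<alpha> = 0" by (simp add: Dh_def)
qed

lemma tdeg_zero: "tdeg (\<alpha>::'n::finite \<Rightarrow> nat) = 0 \<Longrightarrow> \<alpha> = (\<lambda>_. 0)"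
  unfolding tdeg_def by (auto simp: fun_eq_iff)

lemma bc_self: "bc \<beta> \<beta> = 1"
  unfolding bc_def by simp

lemma mpow_zero: "mpow x (\<lambda>_. 0) = 1"
  unfolding mpow_def by simp

lemma top_eval:
  assumes fin: "finite {\<alpha>. e \<alpha> \<noteq> 0}" and sup: "\<And>\<alpha>. e \<alpha> \<noteq> 0 \<Longrightarrow> tdeg \<alpha> \<le> E" and b: "tdeg \<beta> = E"
  shows "ev (Dh \<beta> e) x = e \<beta>"
proof -
  have s: "{\<alpha>. Dh \<beta> e \<alpha> \<noteq> 0} \<subseteq> {\<lambda>_. 0}"
  proof
    fix \<alpha> assume "\<alpha> \<in> {\<alpha>. Dh \<beta> e \<alpha> \<noteq> 0}"
    then have "e (\<lambda>i. \<alpha> i + \<beta> i) \<noteq> 0" by (auto simp: Dh_def)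
    then have "tdeg (\<lambda>i. \<alpha> i + \<beta> i) \<le> E" by (rule sup)
    then have "tdeg \<alpha> = 0" using b by (simp add: tdeg_add)
    then show "\<alpha> \<in> {\<lambda>_. 0}" using tdeg_zero by auto
  qed
  have "ev (Dh \<beta> e) x = (\<Sum>\<alpha>\<in>{\<lambda>_. 0}. Dh \<beta> e \<alpha> * mpow x \<alpha>)"
    by (rule ev_superset[OF _ s]) simp
  also have "\<dots> = e \<beta>" by (simp add: Dh_def bc_self mpow_zero)
  finally show ?thesis .
qed

lemma direction_line: "direction {u + c *s v | c. True} = proj_pt (v :: 'k::field ^ 'n)"
proof (intro equalityI subsetI)
  fix w assume "w \<in> direction {u + c *s v | c. True}"
  then obtain a b where w: "w = (u + a *s v) - (u + b *s v)" unfolding direction_def by auto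
  have "w = (a - b) *s v" unfolding w by (simp add: vec_eq_iff algebra_simps)
  then show "w \<in> proj_pt v" unfolding proj_pt_def by blast
next
  fix w assume "w \<in> proj_pt v"
  then obtain a where w: "w = a *s v" unfolding proj_pt_def by auto
  have "w = (u + a *s v) - (u + 0 *s v)" unfolding w by (simp add: vec_eq_iff)
  then show "w \<in> direction {u + c *s v | c. True}" unfolding direction_def by blast
qed

lemma proj_pt_eq: "proj_pt v = proj_pt w \<Longrightarrow> \<exists>a. v = a *s w"
proof -
  assume "proj_pt v = proj_pt w"
  moreover have "v \<in> proj_pt v" unfolding proj_pt_def by (auto intro: exI[of _ 1])
  ultimately show ?thesis unfolding proj_pt_def by auto
qed



lemma line_step:
  fixes c :: "('n::finite \<Rightarrow> nat) \<Rightarrow> 'k::field" and S' :: "('n \<Rightarrow> 'k) set"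
  assumes fin: "finite {\<alpha>. c \<alpha> \<noteq> 0}"
    and sup: "\<And>\<alpha>. c \<alpha> \<noteq> 0 \<Longrightarrow> tdeg \<alpha> \<le> D'"
    and van: "\<And>s \<gamma>. s \<in> S' \<Longrightarrow> tdeg \<gamma> < m \<Longrightarrow> ev (Dh \<gamma> c) s = 0"
    and T: "finite T" "N \<le> card T" "\<And>t. t \<in> T \<Longrightarrow> (\<lambda>i. U i + t * W i) \<in> S'"
    and num: "D' < r * N" "r + tdeg \<gamma> \<le> m"
  shows "ev (Dh \<gamma> (\<lambda>\<alpha>. if tdeg \<alpha> = D' then c \<alpha> else 0)) W = 0"
proof -
  define top where "top = (\<lambda>\<alpha>. if tdeg \<alpha> = D' then c \<alpha> else 0)"
  have supt: "tdeg \<alpha> \<le> D'" if "top \<alpha> \<noteq> 0" for \<alpha> using that sup by (auto simp: top_def split: if_splits)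
  show ?thesis
  proof (cases "tdeg \<gamma> > D'")
    case True
    show ?thesis unfolding top_def[symmetric] by (rule Dh_high[OF supt True])
  next
    case False
    define g where "g = tdeg \<gamma>"
    have gD: "g \<le> D'" using False by (simp add: g_def)
    define E where "E = D' - g"
    define \<mu> where "\<mu> = m - g"
    define e where "e = Dh \<gamma> c"
    have fe: "finite {\<alpha>. e \<alpha> \<noteq> 0}" unfolding e_def by (rule fin_Dh[OF fin])
    have supe: "tdeg \<alpha> \<le> E" if "e \<alpha> \<noteq> 0" for \<alpha>
    proof -
      have "c (\<lambda>i. \<alpha> i + \<gamma> i) \<noteq> 0" using that by (auto simp: e_def Dh_def)
      then have "tdeg (\<lambda>i. \<alpha> i + \<gamma> i) \<le> D'" by (rule sup)
      then show ?thesis by (simp add: tdeg_add E_def g_def)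
    qed
    have LL: "(\<Sum>\<beta>\<in>{\<beta>::'n\<Rightarrow>nat. tdeg \<beta> = E}. ev (Dh \<beta> e) U * mpow W \<beta>) = 0"
    proof (rule line_lemma[OF fe T(1) T(2), of \<mu> W U E])
      fix t and \<beta> :: "'n \<Rightarrow> nat" assume t: "t \<in> T" and b: "tdeg \<beta> < \<mu>"
      have "ev (Dh (\<lambda>i. \<beta> i + \<gamma> i) c) (\<lambda>i. U i + t * W i) = 0"
        by (rule van[OF T(3)[OF t]]) (use b num in \<open>simp add: tdeg_add \<mu>_def g_def\<close>)
      then show "ev (Dh \<beta> e) (\<lambda>i. U i + t * W i) = 0" unfolding e_def by (simp add: ev_DhDh[OF fin])
    next
      fix \<beta> :: "'n \<Rightarrow> nat" assume b: "E < tdeg \<beta>"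
      have "D' < tdeg (\<lambda>i. \<beta> i + \<gamma> i)" unfolding tdeg_add using b gD unfolding E_def g_def by linarith
      then have "ev (Dh (\<lambda>i. \<beta> i + \<gamma> i) c) U = 0"
        using Dh_high[of c D' "\<lambda>i. \<beta> i + \<gamma> i" U] sup by blast
      then show "ev (Dh \<beta> e) U = 0" unfolding e_def by (simp add: ev_DhDh[OF fin])
    next
      have "r \<le> \<mu>" using num by (simp add: \<mu>_def g_def)
      then have "r * N \<le> \<mu> * N" by (rule mult_le_mono1)
      moreover have "E \<le> D'" by (simp add: E_def)
      ultimately show "E < \<mu> * N" using num(1) by linarith
    qed
    have s: "{\<alpha>. Dh \<gamma> top \<alpha> \<noteq> 0} \<subseteq> {\<beta>. tdeg \<beta> = E}"
    proof
      fix \<alpha> assume "\<alpha> \<in> {\<alpha>. Dh \<gamma> top \<alpha> \<noteq> 0}"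
      then have "top (\<lambda>i. \<alpha> i + \<gamma> i) \<noteq> 0" by (auto simp: Dh_def)
      then have "tdeg (\<lambda>i. \<alpha> i + \<gamma> i) = D'" by (auto simp: top_def split: if_splits)
      then show "\<alpha> \<in> {\<beta>. tdeg \<beta> = E}" by (simp add: tdeg_add E_def g_def)
    qed
    have "ev (Dh \<gamma> top) W = (\<Sum>\<beta>\<in>{\<beta>. tdeg \<beta> = E}. Dh \<gamma> top \<beta> * mpow W \<beta>)"
      by (rule ev_superset[OF _ s]) simp
    also have "\<dots> = (\<Sum>\<beta>\<in>{\<beta>::'n\<Rightarrow>nat. tdeg \<beta> = E}. ev (Dh \<beta> e) U * mpow W \<beta>)"
    proof (rule sum.cong[OF refl])
      fix \<beta> :: "'n \<Rightarrow> nat" assume "\<beta> \<in> {\<beta>. tdeg \<beta> = E}"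
      then have b: "tdeg \<beta> = E" by simp
      then have "tdeg (\<lambda>i. \<beta> i + \<gamma> i) = D'" using gD by (simp add: tdeg_add E_def g_def)
      then have "Dh \<gamma> top \<beta> = e \<beta>" by (simp add: Dh_def top_def e_def)
      moreover have "ev (Dh \<beta> e) U = e \<beta>" by (rule top_eval[OF fe supe b])
      ultimately show "Dh \<gamma> top \<beta> * mpow W \<beta> = ev (Dh \<beta> e) U * mpow W \<beta>" by simp
    qed
    also have "\<dots> = 0" by (rule LL)
    finally show ?thesis unfolding top_def .
  qed
qed

lemma top_witness:
  fixes top :: "('n::finite \<Rightarrow> nat) \<Rightarrow> 'k::field"
  assumes fin: "finite {\<alpha>. top \<alpha> \<noteq> 0}" and ne: "top \<alpha>0 \<noteq> 0"
    and hom: "\<And>\<alpha>. top \<alpha> \<noteq> 0 \<Longrightarrow> tdeg \<alpha> = D'"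
  shows "\<exists>\<gamma>. \<gamma> i0 = 0 \<and> ev (Dh \<gamma> top) (\<lambda>_. 1) \<noteq> 0"
proof -
  define I where "I = UNIV - {i0}"
  define f where "f = (\<lambda>\<alpha>::'n\<Rightarrow>nat. sum \<alpha> I)"
  have td: "tdeg \<alpha> = \<alpha> i0 + f \<alpha>" for \<alpha> :: "'n \<Rightarrow> nat"
    unfolding tdeg_def f_def I_def by (simp add: sum.remove[of UNIV i0])
  let ?Su = "{\<alpha>. top \<alpha> \<noteq> 0}"
  have neS: "?Su \<noteq> {}" using ne by auto
  obtain \<alpha>1 where a1: "\<alpha>1 \<in> ?Su" and a1m: "\<And>\<alpha>. \<alpha> \<in> ?Su \<Longrightarrow> f \<alpha> \<le> f \<alpha>1"
  proof -
    have "Max (f ` ?Su) \<in> f ` ?Su" using fin neS by (intro Max_in) auto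
    then obtain \<alpha>1 where "\<alpha>1 \<in> ?Su" "f \<alpha>1 = Max (f ` ?Su)" by auto
    moreover have "f \<alpha> \<le> Max (f ` ?Su)" if "\<alpha> \<in> ?Su" for \<alpha> using fin that by (intro Max_ge) auto
    ultimately show ?thesis using that by metis
  qed
  define \<gamma>1 where "\<gamma>1 = \<alpha>1(i0 := 0)"
  define \<epsilon> where "\<epsilon> = (\<lambda>i. if i = i0 then \<alpha>1 i0 else (0::nat))"
  have fg: "f \<gamma>1 = f \<alpha>1" unfolding f_def \<gamma>1_def I_def by (intro sum.cong) auto
  have fadd: "f (\<lambda>i. a i + b i) = f a + f b" for a b :: "'n \<Rightarrow> nat" unfolding f_def by (simp add: sum.distrib)
  have s: "{\<alpha>. Dh \<gamma>1 top \<alpha> \<noteq> 0} \<subseteq> {\<epsilon>}"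
  proof
    fix \<alpha> assume "\<alpha> \<in> {\<alpha>. Dh \<gamma>1 top \<alpha> \<noteq> 0}"
    then have t: "top (\<lambda>i. \<alpha> i + \<gamma>1 i) \<noteq> 0" by (auto simp: Dh_def)
    then have "f (\<lambda>i. \<alpha> i + \<gamma>1 i) \<le> f \<alpha>1" using a1m by auto
    then have f0: "f \<alpha> = 0" using fadd fg by simp
    then have z: "\<alpha> i = 0" if "i \<noteq> i0" for i using that unfolding f_def I_def by simp
    have "tdeg (\<lambda>i. \<alpha> i + \<gamma>1 i) = tdeg \<alpha>1" using hom[OF t] hom a1 by auto
    moreover have g10: "\<gamma>1 i0 = 0" by (simp add: \<gamma>1_def)
    moreover have "tdeg (\<lambda>i. \<alpha> i + \<gamma>1 i) = \<alpha> i0 + f \<alpha>1"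
      unfolding td using fadd[of \<alpha> \<gamma>1] fg f0 g10 by simp
    ultimately have "\<alpha> i0 + f \<alpha>1 = \<alpha>1 i0 + f \<alpha>1" using td[of \<alpha>1] by simp
    then have "\<alpha> i0 = \<alpha>1 i0" by simp
    then have "\<alpha> = \<epsilon>" using z by (auto simp: \<epsilon>_def fun_eq_iff)
    then show "\<alpha> \<in> {\<epsilon>}" by simp
  qed
  have ea: "(\<lambda>i. \<epsilon> i + \<gamma>1 i) = \<alpha>1" by (auto simp: \<epsilon>_def \<gamma>1_def fun_eq_iff)
  have bc1: "bc \<alpha>1 \<gamma>1 = 1"
  proof -
    have "\<alpha>1 = \<gamma>1(i0 := \<alpha>1 i0)" by (simp add: \<gamma>1_def)
    moreover have "bc (\<gamma>1(i0 := \<alpha>1 i0)) \<gamma>1 = 1" by (rule bc_upd2) (simp add: \<gamma>1_def)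
    ultimately show ?thesis by simp
  qed
  have "ev (Dh \<gamma>1 top) (\<lambda>_. 1) = (\<Sum>\<alpha>\<in>{\<epsilon>}. Dh \<gamma>1 top \<alpha> * mpow (\<lambda>_. 1) \<alpha>)"
    by (rule ev_superset[OF _ s]) simp
  also have "\<dots> = top \<alpha>1" by (simp add: Dh_def ea bc1 mpow_def)
  finally have "ev (Dh \<gamma>1 top) (\<lambda>_. 1) \<noteq> 0" using a1 by simp
  then show ?thesis by (intro exI[of _ \<gamma>1]) (simp add: \<gamma>1_def)
qed



lemma tdeg_le_box: "{\<alpha>::'n::finite\<Rightarrow>nat. tdeg \<alpha> \<le> d} \<subseteq> mbox d"
proof
  fix \<beta> :: "'n \<Rightarrow> nat" assume "\<beta> \<in> {\<beta>. tdeg \<beta> \<le> d}"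
  then have "\<beta> i \<le> d" for i unfolding tdeg_def
    using member_le_sum[of i UNIV \<beta>] by auto
  then show "\<beta> \<in> mbox d" by (auto simp: mbox_def)
qed

lemma finite_mon: "finite {\<alpha>::'n::finite\<Rightarrow>nat. tdeg \<alpha> \<le> d}"
  using tdeg_le_box finite_box finite_subset by blast

theorem theorem3p2:
  fixes L :: "('k::field ^ 'n) set set" and S :: "('k ^ 'n) set" and N r :: nat
  assumes "CARD('n) \<ge> 2" and "N > 0"
    and "\<forall>l\<in>L. affine_line l"
    and "finite S"
    and "\<forall>l\<in>L. card (l \<inter> S) \<ge> N"
    and "\<exists>G. is_grid N G \<and> G \<subseteq> direction ` L"
    and "r > 0"
  shows "((2*r + CARD('n) - 2) choose CARD('n)) * card S \<ge> ((r*N + CARD('n) - 1) choose CARD('n))"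
proof (rule ccontr)
  assume "\<not> ?thesis"
  then have lt: "((2*r + CARD('n) - 2) choose CARD('n)) * card S < ((r*N + CARD('n) - 1) choose CARD('n))"
    by simp
  note affL = assms(3) and finS = assms(4) and cardL = assms(5)
  have r1: "r \<ge> 1" and N1: "N \<ge> 1" using assms(2,7) by auto
  have rN1: "r * N \<ge> 1" using r1 N1 by (simp add: Suc_le_eq)
  from assms(6) obtain G where grid: "is_grid N G" and GL: "G \<subseteq> direction ` L" by blast
  from grid obtain M :: "'k^'n^'n" and i0 :: 'n and A :: "'n \<Rightarrow> 'k set" where
    invM: "invertible M" and A: "\<forall>i. i \<noteq> i0 \<longrightarrow> finite (A i) \<and> card (A i) = N"
    and Geq: "G = {proj_pt (M *v x) | x. x $ i0 = 1 \<and> (\<forall>i. i \<noteq> i0 \<longrightarrow> x $ i \<in> A i)}"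
    unfolding is_grid_def by blast
  from invM obtain M' :: "'k^'n^'n" where MM: "M ** M' = mat 1" "M' ** M = mat 1"
    unfolding invertible_def by blast
  define tr where "tr = (\<lambda>p::'k^'n. \<lambda>i. (M' *v p) $ i)"
  define S' where "S' = tr ` S"
  have inj_tr: "inj tr"
  proof (rule injI)
    fix p q assume "tr p = tr q"
    then have "M' *v p = M' *v q" unfolding tr_def by (simp add: vec_eq_iff fun_eq_iff)
    then have "M *v (M' *v p) = M *v (M' *v q)" by simp
    then show "p = q" by (simp add: matrix_vector_mul_assoc MM)
  qed
  have cS': "card S' = card S" unfolding S'_def by (rule card_image) (use inj_tr in \<open>simp add: inj_on_def inj_def\<close>)
  have finS': "finite S'" unfolding S'_def using finS by simp
  define D where "D = r * N - 1"
  define m where "m = 2 * r - 1"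
  define Mon where "Mon = (\<lambda>d. {\<alpha>::'n\<Rightarrow>nat. tdeg \<alpha> \<le> d})"
  have finMon: "finite (Mon d)" for d unfolding Mon_def by (rule finite_mon)
  have cI: "card (Mon D) = (r*N + CARD('n) - 1) choose CARD('n)"
    unfolding Mon_def card_mon D_def using rN1 by simp
  have em: "m - 1 + CARD('n) = 2*r + CARD('n) - 2" unfolding m_def using r1 by arith
  have cM: "card (Mon (m - 1)) = (2*r + CARD('n) - 2) choose CARD('n)"
    unfolding Mon_def card_mon em ..
  define J where "J = S' \<times> Mon (m - 1)"
  have finJ: "finite J" unfolding J_def using finS' finMon by simp
  have cJ: "card J < card (Mon D)"
    unfolding J_def card_cartesian_product cS' cI cM using lt by (simp add: mult.commute)
  define a where "a = (\<lambda>(s::'n\<Rightarrow>'k, \<gamma>::'n\<Rightarrow>nat) (\<alpha>::'n\<Rightarrow>nat). of_nat (bc \<alpha> \<gamma>) * mpow s (\<lambda>i. \<alpha> i - \<gamma> i))"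
  obtain c0 where c0nz: "\<exists>\<alpha>\<in>Mon D. c0 \<alpha> \<noteq> (0::'k)" and c0eq: "\<forall>j\<in>J. (\<Sum>\<alpha>\<in>Mon D. a j \<alpha> * c0 \<alpha>) = 0"
    using lin_solve[OF finJ finMon cJ, of a] by blast
  define c where "c = (\<lambda>\<alpha>. if \<alpha> \<in> Mon D then c0 \<alpha> else 0)"
  have suppc: "{\<alpha>. c \<alpha> \<noteq> 0} \<subseteq> Mon D" by (auto simp: c_def split: if_splits)
  have finc: "finite {\<alpha>. c \<alpha> \<noteq> 0}" using suppc finMon finite_subset by blast
  have van: "ev (Dh \<gamma> c) s = 0" if s: "s \<in> S'" and g: "tdeg \<gamma> < m" for s \<gamma>
  proof -
    have "(s, \<gamma>) \<in> J" unfolding J_def Mon_def using s g by auto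
    then have z: "(\<Sum>\<alpha>\<in>Mon D. a (s, \<gamma>) \<alpha> * c0 \<alpha>) = 0" using c0eq by blast
    have "ev (Dh \<gamma> c) s = (\<Sum>\<alpha>\<in>Mon D. c \<alpha> * of_nat (bc \<alpha> \<gamma>) * mpow s (\<lambda>i. \<alpha> i - \<gamma> i))"
      by (rule EvD[OF finMon suppc])
    also have "\<dots> = (\<Sum>\<alpha>\<in>Mon D. a (s, \<gamma>) \<alpha> * c0 \<alpha>)"
      by (intro sum.cong) (auto simp: c_def a_def mult_ac)
    finally show ?thesis using z by simp
  qed
  have suppne: "{\<alpha>. c \<alpha> \<noteq> 0} \<noteq> {}" using c0nz by (auto simp: c_def)
  define D' where "D' = Max (tdeg ` {\<alpha>. c \<alpha> \<noteq> 0})"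
  have sup: "tdeg \<alpha> \<le> D'" if "c \<alpha> \<noteq> 0" for \<alpha>
    unfolding D'_def using finc that by (intro Max_ge) auto
  have D'D: "D' \<le> D" unfolding D'_def using finc suppne suppc
    by (subst Max_le_iff) (auto simp: Mon_def)
  obtain \<alpha>0 where a0: "c \<alpha>0 \<noteq> 0" "tdeg \<alpha>0 = D'"
  proof -
    have "D' \<in> tdeg ` {\<alpha>. c \<alpha> \<noteq> 0}" unfolding D'_def using finc suppne by (intro Max_in) auto
    then show ?thesis using that by auto
  qed
  define top where "top = (\<lambda>\<alpha>. if tdeg \<alpha> = D' then c \<alpha> else 0)"
  have fintop: "finite {\<alpha>. top \<alpha> \<noteq> 0}" using finc by (rule finite_subset[rotated]) (auto simp: top_def)
  have claim7: "ev (Dh \<gamma> top) x = 0"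
    if x1: "x i0 = 1" and x2: "\<And>i. i \<noteq> i0 \<Longrightarrow> x i \<in> A i" and g: "tdeg \<gamma> < r" for x \<gamma>
  proof -
    define X where "X = (\<chi> i. x i)"
    have "proj_pt (M *v X) \<in> G" unfolding Geq X_def using x1 x2 by auto
    then obtain l where l: "l \<in> L" and dl: "direction l = proj_pt (M *v X)" using GL by auto
    from affL l obtain u v where v0: "v \<noteq> 0" and leq: "l = {u + c *s v | c. True}"
      unfolding affine_line_def by blast
    define w where "w = M *v X"
    have "proj_pt v = proj_pt w" using dl unfolding leq direction_line w_def .
    then obtain lam where vw: "v = lam *s w" using proj_pt_eq by blast
    have w0: "w \<noteq> 0" using v0 vw by auto
    then obtain j where wj: "w $ j \<noteq> 0" by (auto simp: vec_eq_iff)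
    define f where "f = (\<lambda>t. u + t *s w)"
    have injf: "inj f"
    proof (rule injI)
      fix t t' assume "f t = f t'"
      then have "t * w $ j = t' * w $ j" unfolding f_def by (auto simp: vec_eq_iff)
      then show "t = t'" using wj by simp
    qed
    define T where "T = {t. f t \<in> S}"
    have fT: "f ` T \<subseteq> S" unfolding T_def by auto
    have finT: "finite T"
      using finite_subset[OF fT finS] injf by (metis finite_imageD injD inj_onI)
    have lS: "l \<inter> S \<subseteq> f ` T"
    proof
      fix p assume "p \<in> l \<inter> S"
      then obtain cc where p: "p = u + cc *s v" "p \<in> S" unfolding leq by auto
      then have "p = f (cc * lam)" unfolding f_def vw by (simp add: vector_smult_assoc)
      then show "p \<in> f ` T" using p unfolding T_def by auto
    qed
    have "N \<le> card (l \<inter> S)" using cardL l by auto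
    also have "\<dots> \<le> card (f ` T)" using lS finT by (intro card_mono) auto
    also have "\<dots> = card T" using injf by (simp add: card_image inj_on_def inj_def)
    finally have NT: "N \<le> card T" .
    define U where "U = tr u"
    have inS': "(\<lambda>i. U i + t * x i) \<in> S'" if "t \<in> T" for t
    proof -
      have "M' *v (u + t *s w) = M' *v u + t *s X"
        unfolding w_def by (simp add: matrix_vector_right_distrib vector_scalar_commute matrix_vector_mul_assoc MM)
      then have "tr (f t) = (\<lambda>i. U i + t * x i)"
        unfolding tr_def U_def f_def by (simp add: fun_eq_iff X_def)
      moreover have "f t \<in> S" using that unfolding T_def by simp
      ultimately show ?thesis unfolding S'_def by force
    qed
    have "ev (Dh \<gamma> top) x = 0" unfolding top_def
    proof (rule line_step[OF finc sup van finT NT inS'])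
      show "D' < r * N" using D'D rN1 unfolding D_def by linarith
      show "r + tdeg \<gamma> \<le> m" using g by (simp add: m_def)
    qed
    then show ?thesis .
  qed
  define I where "I = UNIV - {i0}"
  have tdI: "tdeg \<alpha> = \<alpha> i0 + sum \<alpha> I" for \<alpha> :: "'n \<Rightarrow> nat"
    unfolding tdeg_def I_def by (simp add: sum.remove[of UNIV i0])
  have "r * N \<le> D'"
  proof (rule grid_lemma[of I A N top r D' "\<lambda>_. 1"])
    show "finite I" by simp
    show "\<And>i. i \<in> I \<Longrightarrow> finite (A i) \<and> card (A i) = N" using A by (auto simp: I_def)
    show "finite {\<alpha>. top \<alpha> \<noteq> 0}" by (rule fintop)
    show "1 \<le> r" by (rule r1)
    show "sum \<alpha> I \<le> D'" if "top \<alpha> \<noteq> 0" for \<alpha>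
    proof -
      have "tdeg \<alpha> = D'" using that by (auto simp: top_def split: if_splits)
      then show ?thesis using tdI[of \<alpha>] by simp
    qed
    show "ev (Dh \<gamma> top) x = 0"
      if "\<forall>i\<in>I. x i \<in> A i" "\<forall>i. i \<notin> I \<longrightarrow> x i = 1" "\<forall>i. i \<notin> I \<longrightarrow> \<gamma> i = 0" "sum \<gamma> I < r" for x \<gamma>
    proof (rule claim7)
      show "x i0 = 1" using that(2) by (simp add: I_def)
      show "x i \<in> A i" if "i \<noteq> i0" for i using \<open>\<forall>i\<in>I. x i \<in> A i\<close> that by (simp add: I_def)
      have "\<gamma> i0 = 0" using that(3) by (simp add: I_def)
      then show "tdeg \<gamma> < r" using tdI[of \<gamma>] that(4) by simp
    qed
    have ne: "top \<alpha>0 \<noteq> 0" using a0 by (simp add: top_def)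
    have hom: "tdeg \<alpha> = D'" if "top \<alpha> \<noteq> 0" for \<alpha> using that by (simp add: top_def split: if_splits)
    obtain \<gamma> where "\<gamma> i0 = 0" "ev (Dh \<gamma> top) (\<lambda>_. 1) \<noteq> 0"
      using top_witness[OF fintop ne hom, of i0] by blast
    then show "\<exists>x \<gamma>. (\<forall>i. i \<notin> I \<longrightarrow> x i = 1) \<and> (\<forall>i. i \<notin> I \<longrightarrow> \<gamma> i = 0) \<and> ev (Dh \<gamma> top) x \<noteq> 0"
      by (intro exI[of _ "\<lambda>_. 1"] exI[of _ \<gamma>]) (auto simp: I_def)
  qed
  then show False using D'D rN1 unfolding D_def by linarith
qed

end
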